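(* Consider the Gaussian channel with ISI and colored noise defined in the context, whose noise covariance matrices $\boldsymbol{\Sigma}$ satisfy $\sigma_{\min}(\boldsymbol{\Sigma})\in\Omega(n^{-\mu})$ and $\sigma_{\max}(\boldsymbol{\Sigma})\in\mathcal{O}(n^{\mu/2})$ for some $\mu\in[0,1/2)$, and with $K=K(n,\kappa)=n^{\kappa}$ taps for some $\kappa\in[0,1)$. Suppose $R$ is an achievable identification rate, and let $\{(\mathbb{C}^{(n)},\mathcal{D}^{(n)})\}_{n\in\mathbb{N}}$ be a sequence of $(n,M(n,R),K(n,\kappa),e_1^{(n)},e_2^{(n)})$-DI codes with $e_1^{(n)}\to 0$ and $e_2^{(n)}\to 0$ as $n\to\infty$. Fix constants $a>0$ and $b>0$ (with $b$ arbitrarily small), and set $\epsilon_n' = a/\bar n^{2(1+(\mu/2)+b)}$. Then for sufficiently large $n$, any two distinct convoluted codewords satisfy $$\|\mathbf{H}\mathbf{c}_{i_1}-\mathbf{H}\mathbf{c}_{i_2}\| \ge \sqrt{\bar n\,\epsilon_n'} \quad\text{for all } i_1\neq i_2 \in\{1,\dots,M\}.$$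
   Context: Channel model: for codeword length $n$, let $K\ge 1$ be the number of ISI taps and $\bar n=n+K-1$. The channel impulse response is a real sequence $(h_k)_{k=0}^{K-1}$ with $h_0h_{K-1}\ne 0$, $h_k=0$ for $k<0$ or $k\ge K$, and $\mathbf{H}\in\mathbb{R}^{\bar n\times n}$ is the Toeplitz convolution matrix $[h_{i-j}]$; the vector $\mathbf{H}\mathbf{c}_i$ (with entries $\sum_{k=0}^{K-1}h_kc_{i,t-k}$, $c_{i,t}=0$ for $t\le 0$) is the convoluted codeword. Output: $\mathbf{Y}=\mathbf{H}\mathbf{x}+\mathbf{Z}$ with $\mathbf{Z}\sim\mathcal{N}(\mathbf{0},\boldsymbol{\Sigma})$, $\boldsymbol{\Sigma}\in\mathbb{R}^{\bar n\times\bar n}$ symmetric positive definite, noise density $f_{\mathbf{Z}}$. An $(n,M,K,e_1,e_2)$-DI code under peak power $P_{\max}>0$ consists of codewords $\mathbf{c}_1,\dots,\mathbf{c}_M\in\mathbb{R}^n$ with $|c_{i,t}|\le P_{\max}$ and decoding sets $\mathbb{D}_i\subset\mathbb{R}^{\bar n}$ with $1-\int_{\mathbb{D}_i}f_{\mathbf{Z}}(\mathbf{y}-\mathbf{H}\mathbf{c}_i)d\mathbf{y}\le e_1$ for all $i$ and $\int_{\mathbb{D}_j}f_{\mathbf{Z}}(\mathbf{y}-\mathbf{H}\mathbf{c}_i)d\mathbf{y}\le e_2$ for all $i\ne j$. A rate $R$ is achievable if for every $e_1,e_2>0$ and large $n$ such a code exists with $M=2^{(n\log n)R}$. *)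

theory Defs
  imports "HOL-Probability.Probability" "HOL-Combinatorics.Permutations"
          "HOL-Library.Landau_Symbols"
begin

text \<open>Vectors of length m are functions nat => real (only indices < m matter);
  m x m matrices are functions nat => nat => real (only indices < m matter).\<close>

definition nbar :: "nat \<Rightarrow> nat \<Rightarrow> nat" where
  "nbar n K = n + K - 1"

text \<open>Convolution (H c)_t = sum_{k<K} h_k c_{t-k}, 0-based time index t < n + K - 1,
  codeword entries c_s for s < n, zero otherwise.\<close>
definition conv :: "(nat \<Rightarrow> real) \<Rightarrow> nat \<Rightarrow> nat \<Rightarrow> (nat \<Rightarrow> real) \<Rightarrow> nat \<Rightarrow> real" where
  "conv h K n c t = (\<Sum>k<K. if k \<le> t \<and> t - k < n then h k * c (t - k) else 0)"

definition mat_det :: "nat \<Rightarrow> (nat \<Rightarrow> nat \<Rightarrow> real) \<Rightarrow> real" where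
  "mat_det m S = (\<Sum>p | p permutes {..<m}. of_int (sign p) * (\<Prod>i<m. S i (p i)))"

definition mat_inv :: "nat \<Rightarrow> (nat \<Rightarrow> nat \<Rightarrow> real) \<Rightarrow> (nat \<Rightarrow> nat \<Rightarrow> real)" where
  "mat_inv m S = (SOME B. \<forall>i<m. \<forall>j<m. (\<Sum>k<m. S i k * B k j) = (if i = j then 1 else 0))"

definition sym_pos_def :: "nat \<Rightarrow> (nat \<Rightarrow> nat \<Rightarrow> real) \<Rightarrow> bool" where
  "sym_pos_def m S \<longleftrightarrow> (\<forall>i<m. \<forall>j<m. S i j = S j i) \<and>
     (\<forall>x. (\<exists>i<m. x i \<noteq> 0) \<longrightarrow> (\<Sum>i<m. \<Sum>j<m. x i * S i j * x j) > 0)"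

definition sv_max :: "nat \<Rightarrow> (nat \<Rightarrow> nat \<Rightarrow> real) \<Rightarrow> real" where
  "sv_max m S = (SUP x\<in>{x. (\<Sum>i<m. (x i)\<^sup>2) = 1}. sqrt (\<Sum>i<m. (\<Sum>j<m. S i j * x j)\<^sup>2))"

definition sv_min :: "nat \<Rightarrow> (nat \<Rightarrow> nat \<Rightarrow> real) \<Rightarrow> real" where
  "sv_min m S = (INF x\<in>{x. (\<Sum>i<m. (x i)\<^sup>2) = 1}. sqrt (\<Sum>i<m. (\<Sum>j<m. S i j * x j)\<^sup>2))"

definition gauss_density :: "nat \<Rightarrow> (nat \<Rightarrow> nat \<Rightarrow> real) \<Rightarrow> (nat \<Rightarrow> real) \<Rightarrow> real" where
  "gauss_density m S z = (2 * pi) powr (- real m / 2) * (mat_det m S) powr (-1/2) *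
     exp (- (1/2) * (\<Sum>i<m. \<Sum>j<m. z i * mat_inv m S i j * z j))"

abbreviation leb :: "nat \<Rightarrow> (nat \<Rightarrow> real) measure" where
  "leb m \<equiv> PiM {..<m} (\<lambda>_. lborel)"

definition out_prob :: "nat \<Rightarrow> nat \<Rightarrow> (nat \<Rightarrow> real) \<Rightarrow> (nat \<Rightarrow> nat \<Rightarrow> real)
    \<Rightarrow> (nat \<Rightarrow> real) \<Rightarrow> (nat \<Rightarrow> real) set \<Rightarrow> real" where
  "out_prob n K h S c D = enn2real (\<integral>\<^sup>+ y\<in>D. ennreal (gauss_density (nbar n K) S
       (\<lambda>t. y t - conv h K n c t)) \<partial>leb (nbar n K))"

definition is_DI_code :: "nat \<Rightarrow> nat \<Rightarrow> nat \<Rightarrow> (nat \<Rightarrow> real) \<Rightarrow> (nat \<Rightarrow> nat \<Rightarrow> real)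
    \<Rightarrow> real \<Rightarrow> real \<Rightarrow> real \<Rightarrow> (nat \<Rightarrow> nat \<Rightarrow> real) \<Rightarrow> (nat \<Rightarrow> (nat \<Rightarrow> real) set) \<Rightarrow> bool" where
  "is_DI_code n M K h S Pmax e1 e2 c D \<longleftrightarrow>
     (\<forall>i<M. \<forall>t<n. \<bar>c i t\<bar> \<le> Pmax) \<and>
     (\<forall>i<M. D i \<in> sets (leb (nbar n K))) \<and>
     (\<forall>i<M. 1 - out_prob n K h S (c i) (D i) \<le> e1) \<and>
     (\<forall>i<M. \<forall>j<M. i \<noteq> j \<longrightarrow> out_prob n K h S (c i) (D j) \<le> e2)"

definition num_msgs :: "nat \<Rightarrow> real \<Rightarrow> nat" where
  "num_msgs n R = nat \<lfloor>2 powr (real n * log 2 (real n) * R)\<rfloor>"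

definition achievable :: "(nat \<Rightarrow> nat) \<Rightarrow> (nat \<Rightarrow> nat \<Rightarrow> real) \<Rightarrow> (nat \<Rightarrow> nat \<Rightarrow> nat \<Rightarrow> real)
    \<Rightarrow> real \<Rightarrow> real \<Rightarrow> bool" where
  "achievable K h S Pmax R \<longleftrightarrow>
     (\<forall>e1>0. \<forall>e2>0. \<forall>\<^sub>F n in sequentially. \<exists>c D.
        is_DI_code n (num_msgs n R) (K n) (h n) (S n) Pmax e1 e2 c D)"

end

theory Submission
  imports Defs "Jordan_Normal_Form.Determinant"
begin


definition JM :: "nat \<Rightarrow> (nat \<Rightarrow> nat \<Rightarrow> real) \<Rightarrow> real mat" where
  "JM m P = mat m m (\<lambda>(i,j). P i j)"

lemma JM_carrier[simp]: "JM m P \<in> carrier_mat m m"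
  by (simp add: JM_def)

lemma JM_dim[simp]: "dim_row (JM m P) = m" "dim_col (JM m P) = m"
  by (simp_all add: JM_def)

lemma JM_index[simp]: "i < m \<Longrightarrow> j < m \<Longrightarrow> JM m P $$ (i,j) = P i j"
  by (simp add: JM_def)

lemma JM_mult_index:
  "i < m \<Longrightarrow> j < m \<Longrightarrow> (JM m P * JM m Q) $$ (i,j) = (\<Sum>k<m. P i k * Q k j)"
  by (simp add: scalar_prod_def atLeast0LessThan)

lemma mat_det_JM: "mat_det m P = Determinant.det (JM m P)"
  unfolding mat_det_def Determinant.det_def'[OF JM_carrier]
proof (rule sum.cong)
  show "{p. p permutes {..<m}} = {p. p permutes {0..<m}}" by (simp add: atLeast0LessThan)
next
  fix p assume "p \<in> {p. p permutes {0..<m}}"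
  hence p: "p permutes {..<m}" by (simp add: atLeast0LessThan)
  have "(\<Prod>i<m. P i (p i)) = (\<Prod>i = 0..<m. JM m P $$ (i, p i))"
    unfolding atLeast0LessThan[symmetric]
    using permutes_in_image[OF p] by (intro prod.cong) auto
  thus "of_int (sign p) * (\<Prod>i<m. P i (p i)) = of_int (sign p) * (\<Prod>i = 0..<m. JM m P $$ (i, p i))"
    by simp
qed

lemma det_schur:
  assumes pi: "P m m \<noteq> 0"
  shows "mat_det (Suc m) P = P m m * mat_det m (\<lambda>i j. P i j - P i m * P m j / P m m)"
proof -
  define Ef where "Ef = (\<lambda>i j. if i = j then 1 else if j = m then - P i m / P m m else (0::real))"
  define E where "E = JM (Suc m) Ef"
  define A where "A = JM (Suc m) P"
  define B where "B = E * A"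
  have E: "E \<in> carrier_mat (Suc m) (Suc m)" and A: "A \<in> carrier_mat (Suc m) (Suc m)"
    by (simp_all add: E_def A_def)
  have ut: "upper_triangular E"
    unfolding upper_triangular_def E_def by (auto simp: Ef_def)
  have detE: "Determinant.det E = 1"
    unfolding det_upper_triangular[OF ut E] prod_list_diag_prod
    by (simp add: E_def Ef_def)
  have detB: "Determinant.det B = Determinant.det A"
    unfolding B_def det_mult[OF E A] detE by simp
  have Bidx: "B $$ (i,j) = (if i = m then P m j else P i j - P i m / P m m * P m j)"
    if i: "i < Suc m" and j: "j < Suc m" for i j
  proof -
    have "B $$ (i,j) = (\<Sum>k<Suc m. Ef i k * P k j)"
      unfolding B_def E_def A_def using i j by (rule JM_mult_index)
    also have "\<dots> = (if i = m then P m j else P i j - P i m / P m m * P m j)"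
    proof (cases "i = m")
      case True
      then show ?thesis by (simp add: Ef_def if_distrib cong: if_cong)
    next
      case False
      have "(\<Sum>k<Suc m. Ef i k * P k j) =
          (\<Sum>k<Suc m. (if k = i then P k j else 0) + (if k = m then - P i m / P m m * P k j else 0))"
        using False by (intro sum.cong) (auto simp: Ef_def)
      also have "\<dots> = P i j - P i m / P m m * P m j"
        using i False by (simp add: sum.distrib)
      finally show ?thesis using False by simp
    qed
    finally show ?thesis .
  qed
  have B: "B \<in> carrier_mat (Suc m) (Suc m)" using E A unfolding B_def by auto
  have "Determinant.det B = (\<Sum>i<Suc m. B $$ (i,m) * cofactor B i m)"
    by (rule laplace_expansion_column[OF B]) simp
  also have "\<dots> = (\<Sum>i<Suc m. if i = m then P m m * cofactor B m m else 0)"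
    by (intro sum.cong) (auto simp: Bidx pi)
  also have "\<dots> = P m m * cofactor B m m" by simp
  also have "cofactor B m m = Determinant.det (mat_delete B m m)"
    unfolding cofactor_def by simp
  also have "mat_delete B m m = JM m (\<lambda>i j. P i j - P i m * P m j / P m m)"
    using B by (intro eq_matI) (auto simp: mat_delete_def Bidx)
  finally show ?thesis unfolding mat_det_JM A_def[symmetric] detB[symmetric] by simp
qed


definition qf :: "nat \<Rightarrow> (nat \<Rightarrow> nat \<Rightarrow> real) \<Rightarrow> (nat \<Rightarrow> real) \<Rightarrow> real" where
  "qf m P z = (\<Sum>i<m. \<Sum>j<m. z i * P i j * z j)"

lemma meas_comp:
  assumes "i \<in> I"
  shows "(\<lambda>z. z i - (w::nat\<Rightarrow>real) i) \<in> borel_measurable (PiM I (\<lambda>_. lborel))"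
  using assms by measurable

lemma meas_qf:
  assumes "{..<m} \<subseteq> I"
  shows "(\<lambda>z. qf m P (\<lambda>i. z i - w i)) \<in> borel_measurable (PiM I (\<lambda>_. lborel))"
  unfolding qf_def
proof (intro borel_measurable_sum borel_measurable_times)
  fix i j assume "i \<in> {..<m}" "j \<in> {..<m}"
  then show "(\<lambda>z. z i - w i) \<in> borel_measurable (PiM I (\<lambda>_. lborel))"
    "(\<lambda>z. z j - w j) \<in> borel_measurable (PiM I (\<lambda>_. lborel))"
    using assms by (auto intro!: meas_comp)
qed simp

lemma gauss_1d:
  assumes "p > 0"
  shows "(\<integral>\<^sup>+ t. ennreal (exp (- (p * (t - \<mu>)\<^sup>2) / 2)) \<partial>lborel) = ennreal (sqrt (2 * pi / p))"
proof -
  define \<sigma> where "\<sigma> = 1 / sqrt p"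
  have s: "\<sigma> > 0" "\<sigma>\<^sup>2 = 1 / p" using assms by (simp_all add: \<sigma>_def power_divide)
  have eq: "exp (- (p * (t - \<mu>)\<^sup>2) / 2) = sqrt (2 * pi / p) * normal_density \<mu> \<sigma> t" for t
    unfolding normal_density_def s(2) using assms
    by (simp add: field_simps real_sqrt_divide)
  have "(\<integral>\<^sup>+ t. ennreal (normal_density \<mu> \<sigma> t) \<partial>lborel) = 1"
    using s(1) by (subst nn_integral_eq_integral) (auto simp: integrable_normal_density integral_normal_density)
  moreover have "(\<integral>\<^sup>+ t. ennreal (sqrt (2 * pi / p) * normal_density \<mu> \<sigma> t) \<partial>lborel) =
      (\<integral>\<^sup>+ t. ennreal (sqrt (2 * pi / p)) * ennreal (normal_density \<mu> \<sigma> t) \<partial>lborel)"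
    using assms by (intro nn_integral_cong) (simp add: ennreal_mult normal_density_nonneg)
  moreover have "\<dots> = ennreal (sqrt (2 * pi / p)) * (\<integral>\<^sup>+ t. ennreal (normal_density \<mu> \<sigma> t) \<partial>lborel)"
    by (rule nn_integral_cmult) simp
  ultimately show ?thesis unfolding eq by simp
qed

lemma qf_split:
  fixes P :: "nat \<Rightarrow> nat \<Rightarrow> real"
  assumes sym: "\<And>i. i < m \<Longrightarrow> P i m = P m i" and pi: "P m m \<noteq> 0"
  shows "qf (Suc m) P (z(m:=t)) = P m m * (t + (\<Sum>i<m. P m i * z i) / P m m)\<^sup>2
           + qf m (\<lambda>i j. P i j - P i m * P m j / P m m) z"
proof -
  define c where "c = (\<Sum>i<m. P m i * z i)"
  have zt: "\<And>i. i < m \<Longrightarrow> (z(m:=t)) i = z i" by simp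
  have "qf (Suc m) P (z(m:=t)) = (\<Sum>i<Suc m. \<Sum>j<Suc m. (z(m:=t)) i * P i j * (z(m:=t)) j)"
    by (simp add: qf_def)
  also have "\<dots> = (\<Sum>i<m. (\<Sum>j<m. z i * P i j * z j) + z i * P i m * t) + ((\<Sum>j<m. t * P m j * z j) + t * P m m * t)"
  proof -
    have "(\<Sum>i<Suc m. \<Sum>j<Suc m. (z(m:=t)) i * P i j * (z(m:=t)) j)
        = (\<Sum>i<m. \<Sum>j<Suc m. (z(m:=t)) i * P i j * (z(m:=t)) j) + (\<Sum>j<Suc m. t * P m j * (z(m:=t)) j)"
      by simp
    also have "(\<Sum>i<m. \<Sum>j<Suc m. (z(m:=t)) i * P i j * (z(m:=t)) j) = (\<Sum>i<m. (\<Sum>j<m. z i * P i j * z j) + z i * P i m * t)"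
      by (intro sum.cong) auto
    also have "(\<Sum>j<Suc m. t * P m j * (z(m:=t)) j) = (\<Sum>j<m. t * P m j * z j) + t * P m m * t"
    proof -
      have "(\<Sum>j<m. t * P m j * (z(m:=t)) j) = (\<Sum>j<m. t * P m j * z j)" by (intro sum.cong) auto
      thus ?thesis by simp
    qed
    finally show ?thesis .
  qed
  also have "\<dots> = qf m P z + t * c + (t * c + P m m * t * t)"
  proof -
    have "(\<Sum>i<m. z i * P i m * t) = t * c"
      unfolding c_def sum_distrib_left by (intro sum.cong) (auto simp: sym)
    moreover have "(\<Sum>j<m. t * P m j * z j) = t * c"
      unfolding c_def sum_distrib_left by (intro sum.cong) auto
    ultimately show ?thesis by (simp add: sum.distrib qf_def)
  qed
  finally have F1: "qf (Suc m) P (z(m:=t)) = qf m P z + t * c + (t * c + P m m * t * t)" .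
  have F2: "qf m (\<lambda>i j. P i j - P i m * P m j / P m m) z = qf m P z - c * c / P m m"
  proof -
    have "c * c / P m m = (\<Sum>i<m. \<Sum>j<m. z i * (P i m * P m j / P m m) * z j)"
      unfolding c_def sum_product sum_divide_distrib
      by (intro sum.cong refl) (auto simp: sym)
    thus ?thesis unfolding qf_def by (simp add: algebra_simps sum_subtractf)
  qed
  show ?thesis
    unfolding c_def[symmetric] F1 F2 using pi by (simp add: field_simps power2_eq_square)
qed

lemma qf_comb:
  "2 * qf m P a - qf m P b = qf m P (\<lambda>i. 2 * a i - b i) - 2 * qf m P (\<lambda>i. a i - b i)"
  unfolding qf_def by (simp add: sum_subtractf[symmetric] sum_distrib_left algebra_simps)



lemma JM_row_col:
  "i < m \<Longrightarrow> j < m \<Longrightarrow> Matrix.row (JM m P) i \<bullet> col (JM m Q) j = (\<Sum>k<m. P i k * Q k j)"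
  using JM_mult_index[of i m j P Q] by simp

lemma l3: "(d::real) > 0 \<Longrightarrow> A * B = 1 \<Longrightarrow> A * (1 / sqrt d) * (B / sqrt (1 / d)) = 1"
  by (simp add: real_sqrt_divide)

lemma exp_split: "exp (- (a + q) / 2) = exp (- a / 2) * exp (- (q::real) / 2)"
  by (simp add: exp_add[symmetric] field_simps)

lemma sqrt_arith: "B > 0 \<Longrightarrow> D > 0 \<Longrightarrow> sqrt (A / B) * (C / sqrt D) = sqrt A * C / sqrt (B * (D::real))"
  by (simp add: real_sqrt_divide real_sqrt_mult)

lemma meas_gauss:
  assumes "{..<m} \<subseteq> I"
  shows "(\<lambda>z. ennreal (exp (- qf m P (\<lambda>i. z i - w i) / 2))) \<in> borel_measurable (PiM I (\<lambda>_. lborel))"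
proof -
  have [measurable]: "(\<lambda>z. qf m P (\<lambda>i. z i - w i)) \<in> borel_measurable (PiM I (\<lambda>_. lborel))"
    using assms by (rule meas_qf)
  show ?thesis by measurable
qed

lemma gauss_int:
  assumes "sym_pos_def m P"
  shows "mat_det m P > 0 \<and> (\<integral>\<^sup>+ z. ennreal (exp (- qf m P (\<lambda>i. z i - w i) / 2)) \<partial>leb m)
           = ennreal ((2*pi) powr (real m / 2) / sqrt (mat_det m P))"
  using assms
proof (induction m arbitrary: P w)
  case 0
  have "JM 0 P = 1\<^sub>m 0" by (rule eq_matI) auto
  hence d: "mat_det 0 P = 1" by (simp add: mat_det_JM)
  have q0: "\<And>z. qf 0 P z = 0" by (simp add: qf_def)
  have "(\<integral>\<^sup>+ z. ennreal (exp (- qf 0 P (\<lambda>i. z i - w i) / 2)) \<partial>leb 0) = 1"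
    unfolding q0 by (simp add: PiM_empty)
  then show ?case using d by simp
next
  case (Suc m)
  have sym: "\<And>i j. i < Suc m \<Longrightarrow> j < Suc m \<Longrightarrow> P i j = P j i"
    and pd: "\<And>x. (\<exists>i<Suc m. x i \<noteq> 0) \<Longrightarrow> qf (Suc m) P x > 0"
    using Suc.prems unfolding sym_pos_def_def qf_def by blast+
  define x0 where "x0 = (\<lambda>i::nat. if i = m then 1 else (0::real))"
  have "qf (Suc m) P x0 = P m m"
  proof -
    have e: "\<And>i j. x0 i * P i j * x0 j = (if i = m then (if j = m then P m m else 0) else 0)"
      by (simp add: x0_def)
    show ?thesis unfolding qf_def e by simp
  qed
  moreover have "qf (Suc m) P x0 > 0" by (rule pd) (auto simp: x0_def)
  ultimately have pi: "P m m > 0" by simp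
  define P' where "P' = (\<lambda>i j. P i j - P i m * P m j / P m m)"
  have symm: "\<And>i. i < m \<Longrightarrow> P i m = P m i" using sym by simp
  have split: "\<And>z t. qf (Suc m) P (z(m:=t)) = P m m * (t + (\<Sum>i<m. P m i * z i) / P m m)\<^sup>2 + qf m P' z"
    unfolding P'_def using symm pi by (intro qf_split) auto
  have spd': "sym_pos_def m P'"
    unfolding sym_pos_def_def
  proof (intro conjI allI impI)
    fix i j assume "i < m" "j < m"
    then show "P' i j = P' j i" unfolding P'_def using sym[of i j] sym[of i m] sym[of j m] by simp
  next
    fix x :: "nat \<Rightarrow> real" assume ex: "\<exists>i<m. x i \<noteq> 0"
    define t where "t = - (\<Sum>i<m. P m i * x i) / P m m"
    have "qf (Suc m) P (x(m:=t)) > 0" using ex by (intro pd) auto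
    also have "qf (Suc m) P (x(m:=t)) = qf m P' x" unfolding split t_def by simp
    finally show "(\<Sum>i<m. \<Sum>j<m. x i * P' i j * x j) > 0" by (simp add: qf_def)
  qed
  note IH = Suc.IH[OF spd']
  have detS: "mat_det (Suc m) P = P m m * mat_det m P'"
    unfolding P'_def using pi by (intro det_schur) simp
  have detpos: "mat_det (Suc m) P > 0" using IH pi detS by simp
  interpret product_sigma_finite "\<lambda>_. lborel :: real measure" by standard
  have ins: "{..<Suc m} = insert m {..<m}" by auto
  have meas: "(\<lambda>z. ennreal (exp (- qf (Suc m) P (\<lambda>i. z i - w i) / 2))) \<in> borel_measurable (PiM (insert m {..<m}) (\<lambda>_. lborel))"
    by (rule meas_gauss) auto
  have "(\<integral>\<^sup>+ z. ennreal (exp (- qf (Suc m) P (\<lambda>i. z i - w i) / 2)) \<partial>leb (Suc m))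
      = (\<integral>\<^sup>+ x. (\<integral>\<^sup>+ t. ennreal (exp (- qf (Suc m) P (\<lambda>i. (x(m:=t)) i - w i) / 2)) \<partial>lborel) \<partial>leb m)"
    unfolding ins by (rule product_nn_integral_insert[OF _ _ meas]) auto
  also have "\<dots> = (\<integral>\<^sup>+ x. ennreal (sqrt (2 * pi / P m m)) * ennreal (exp (- qf m P' (\<lambda>i. x i - w i) / 2)) \<partial>leb m)"
  proof (rule nn_integral_cong)
    fix x :: "nat \<Rightarrow> real"
    define c where "c = (\<Sum>i<m. P m i * (x i - w i))"
    define q where "q = qf m P' (\<lambda>i. x i - w i)"
    have eq: "(\<lambda>i. (x(m:=t)) i - w i) = (\<lambda>i. x i - w i)(m := t - w m)" for t
      by auto
    have "ennreal (exp (- qf (Suc m) P (\<lambda>i. (x(m:=t)) i - w i) / 2))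
        = ennreal (exp (- (P m m * (t - (w m - c / P m m))\<^sup>2) / 2)) * ennreal (exp (- q / 2))" for t
    proof -
      have "qf (Suc m) P (\<lambda>i. (x(m:=t)) i - w i) = P m m * (t - (w m - c / P m m))\<^sup>2 + q"
      proof -
        have "qf (Suc m) P (\<lambda>i. (x(m:=t)) i - w i) = P m m * (t - w m + c / P m m)\<^sup>2 + q"
          unfolding eq split c_def q_def by simp
        moreover have "t - w m + c / P m m = t - (w m - c / P m m)" by simp
        ultimately show ?thesis by simp
      qed
      hence "exp (- qf (Suc m) P (\<lambda>i. (x(m:=t)) i - w i) / 2)
          = exp (- (P m m * (t - (w m - c / P m m))\<^sup>2) / 2) * exp (- q / 2)"
        using exp_split[of "P m m * (t - (w m - c / P m m))\<^sup>2" q] by simp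
      thus ?thesis by (simp add: ennreal_mult)
    qed
    hence "(\<integral>\<^sup>+ t. ennreal (exp (- qf (Suc m) P (\<lambda>i. (x(m:=t)) i - w i) / 2)) \<partial>lborel)
        = (\<integral>\<^sup>+ t. ennreal (exp (- (P m m * (t - (w m - c / P m m))\<^sup>2) / 2)) * ennreal (exp (- q / 2)) \<partial>lborel)"
      by simp
    also have "\<dots> = (\<integral>\<^sup>+ t. ennreal (exp (- (P m m * (t - (w m - c / P m m))\<^sup>2) / 2)) \<partial>lborel) * ennreal (exp (- q / 2))"
      by (rule nn_integral_multc) measurable
    also have "\<dots> = ennreal (sqrt (2 * pi / P m m)) * ennreal (exp (- q / 2))"
      unfolding gauss_1d[OF pi] ..
    finally show "(\<integral>\<^sup>+ t. ennreal (exp (- qf (Suc m) P (\<lambda>i. (x(m:=t)) i - w i) / 2)) \<partial>lborel)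
        = ennreal (sqrt (2 * pi / P m m)) * ennreal (exp (- qf m P' (\<lambda>i. x i - w i) / 2))"
      unfolding q_def .
  qed
  also have "\<dots> = ennreal (sqrt (2 * pi / P m m)) * (\<integral>\<^sup>+ x. ennreal (exp (- qf m P' (\<lambda>i. x i - w i) / 2)) \<partial>leb m)"
    by (rule nn_integral_cmult) (rule meas_gauss, simp)
  also have "\<dots> = ennreal (sqrt (2 * pi / P m m)) * ennreal ((2*pi) powr (real m / 2) / sqrt (mat_det m P'))"
    using IH by simp
  also have "\<dots> = ennreal (sqrt (2 * pi / P m m) * ((2*pi) powr (real m / 2) / sqrt (mat_det m P')))"
    by (rule ennreal_mult'[symmetric]) (use pi in simp)
  also have "sqrt (2 * pi / P m m) * ((2*pi) powr (real m / 2) / sqrt (mat_det m P'))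
      = (2*pi) powr (real (Suc m) / 2) / sqrt (mat_det (Suc m) P)"
  proof -
    have "(2*pi) powr (real (Suc m) / 2) = (2*pi) powr (1/2) * (2*pi) powr (real m / 2)"
      by (simp add: powr_add[symmetric] add_divide_distrib)
    also have "(2*pi) powr (1/2) = sqrt (2*pi)" by (simp add: powr_half_sqrt)
    finally show ?thesis unfolding detS using pi IH sqrt_arith by simp
  qed
  finally show ?case using detpos by simp
qed
lemma inv_exists:
  assumes spd: "sym_pos_def m S"
  shows "\<forall>i<m. \<forall>j<m. (\<Sum>k<m. S i k * mat_inv m S k j) = (if i = j then 1 else 0)"
proof -
  have dpos: "mat_det m S > 0" using gauss_int[OF spd, of "\<lambda>_. 0"] by simp
  define A where "A = JM m S"
  have A: "A \<in> carrier_mat m m" by (simp add: A_def)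
  have dA: "Determinant.det A \<noteq> 0" using dpos by (simp add: A_def mat_det_JM)
  define B where "B = (\<lambda>i j. adj_mat A $$ (i,j) / Determinant.det A)"
  have "\<forall>i<m. \<forall>j<m. (\<Sum>k<m. S i k * B k j) = (if i = j then 1 else 0)"
  proof (intro allI impI)
    fix i j assume i: "i < m" and j: "j < m"
    have adjc: "adj_mat A \<in> carrier_mat m m" using adj_mat(1)[OF A] .
    have "(A * adj_mat A) $$ (i,j) = (\<Sum>k<m. S i k * adj_mat A $$ (k,j))"
      using i j adjc by (simp add: A_def scalar_prod_def atLeast0LessThan)
    moreover have "(A * adj_mat A) $$ (i,j) = (if i = j then Determinant.det A else 0)"
      unfolding adj_mat(2)[OF A] using i j by simp
    ultimately have "(\<Sum>k<m. S i k * adj_mat A $$ (k,j)) = (if i = j then Determinant.det A else 0)"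
      by simp
    hence "(\<Sum>k<m. S i k * adj_mat A $$ (k,j)) / Determinant.det A = (if i = j then 1 else 0)"
      using dA by simp
    thus "(\<Sum>k<m. S i k * B k j) = (if i = j then 1 else 0)"
      unfolding B_def sum_divide_distrib by simp
  qed
  hence "\<exists>B. \<forall>i<m. \<forall>j<m. (\<Sum>k<m. S i k * B k j) = (if i = j then 1 else 0)" by blast
  from someI_ex[OF this] show ?thesis unfolding mat_inv_def .
qed

lemma inv_props:
  assumes spd: "sym_pos_def m S"
  shows "sym_pos_def m (mat_inv m S)" "mat_det m (mat_inv m S) * mat_det m S = 1"
proof -
  define P where "P = mat_inv m S"
  have SP: "\<And>i j. i < m \<Longrightarrow> j < m \<Longrightarrow> (\<Sum>k<m. S i k * P k j) = (if i = j then 1 else 0)"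
    using inv_exists[OF spd] unfolding P_def by blast
  have symS: "\<And>i j. i < m \<Longrightarrow> j < m \<Longrightarrow> S i j = S j i" using spd unfolding sym_pos_def_def by blast
  have JSP: "JM m S * JM m P = 1\<^sub>m m"
    by (rule eq_matI) (auto simp: JM_row_col SP)
  have JPS: "JM m P * JM m S = 1\<^sub>m m"
    by (rule mat_mult_left_right_inverse[OF JM_carrier JM_carrier JSP])
  have "Determinant.det (JM m S * JM m P) = 1" unfolding JSP by simp
  thus "mat_det m P * mat_det m S = 1"
    unfolding mat_det_JM det_mult[OF JM_carrier JM_carrier] by (simp add: mult.commute)
  have TS: "transpose_mat (JM m S) = JM m S"
    by (rule eq_matI) (auto simp: symS)
  have "transpose_mat (JM m P) * JM m S = 1\<^sub>m m"
  proof -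
    have "transpose_mat (JM m S * JM m P) = transpose_mat (JM m P) * transpose_mat (JM m S)"
      by (rule transpose_mult[OF JM_carrier JM_carrier])
    thus ?thesis unfolding JSP TS by simp
  qed
  hence "transpose_mat (JM m P) = JM m P"
  proof -
    assume h: "transpose_mat (JM m P) * JM m S = 1\<^sub>m m"
    have Tc: "transpose_mat (JM m P) \<in> carrier_mat m m" by simp
    have "transpose_mat (JM m P) = transpose_mat (JM m P) * (JM m S * JM m P)"
      unfolding JSP using Tc by simp
    also have "\<dots> = (transpose_mat (JM m P) * JM m S) * JM m P"
      by (rule assoc_mult_mat[symmetric, OF Tc JM_carrier JM_carrier])
    also have "\<dots> = JM m P" unfolding h by simp
    finally show ?thesis .
  qed
  hence symP: "\<And>i j. i < m \<Longrightarrow> j < m \<Longrightarrow> P i j = P j i"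
    by (metis JM_index index_transpose_mat(1) JM_dim)
  show "sym_pos_def m P"
    unfolding sym_pos_def_def
  proof (intro conjI allI impI)
    fix i j assume "i < m" "j < m" thus "P i j = P j i" by (rule symP)
  next
    fix x :: "nat \<Rightarrow> real" assume ex: "\<exists>i<m. x i \<noteq> 0"
    define y where "y = (\<lambda>k. \<Sum>j<m. P k j * x j)"
    have Sy: "(\<Sum>k<m. S i k * y k) = x i" if i: "i < m" for i
    proof -
      have "(\<Sum>k<m. S i k * y k) = (\<Sum>j<m. (\<Sum>k<m. S i k * P k j) * x j)"
        unfolding y_def sum_distrib_left sum_distrib_right
        by (subst sum.swap) (simp add: mult.assoc)
      also have "\<dots> = (\<Sum>j<m. (if i = j then x j else 0))"
        using i by (intro sum.cong) (auto simp: SP)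
      also have "\<dots> = x i" using i by simp
      finally show ?thesis .
    qed
    have yne: "\<exists>k<m. y k \<noteq> 0"
    proof (rule ccontr)
      assume "\<not> (\<exists>k<m. y k \<noteq> 0)"
      hence "\<And>i. i < m \<Longrightarrow> x i = 0" using Sy by (metis (no_types, lifting) mult_zero_right sum.neutral lessThan_iff)
      thus False using ex by blast
    qed
    have "(\<Sum>i<m. \<Sum>j<m. y i * S i j * y j) > 0" using spd yne unfolding sym_pos_def_def by blast
    also have "(\<Sum>i<m. \<Sum>j<m. y i * S i j * y j) = (\<Sum>i<m. y i * x i)"
    proof (intro sum.cong refl)
      fix i assume "i \<in> {..<m}"
      hence "(\<Sum>j<m. S i j * y j) = x i" by (intro Sy) simp
      thus "(\<Sum>j<m. y i * S i j * y j) = y i * x i"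
        by (simp add: sum_distrib_left[symmetric] mult.assoc)
    qed
    also have "\<dots> = (\<Sum>i<m. \<Sum>j<m. x i * P i j * x j)"
      unfolding y_def sum_distrib_left sum_distrib_right
      by (subst sum.swap) (simp add: mult.commute mult.left_commute symP)
    finally show "(\<Sum>i<m. \<Sum>j<m. x i * P i j * x j) > 0" .
  qed
qed

lemma gauss_density_eq:
  "gauss_density m S z = (2 * pi) powr (- real m / 2) * mat_det m S powr (-1/2) * exp (- qf m (mat_inv m S) z / 2)"
  unfolding gauss_density_def qf_def by simp

lemma gauss_total:
  assumes spd: "sym_pos_def m S"
  shows "(\<integral>\<^sup>+ y. ennreal (gauss_density m S (\<lambda>t. y t - w t)) \<partial>leb m) = 1"
proof -
  define P where "P = mat_inv m S"
  define K where "K = (2 * pi) powr (- real m / 2) * mat_det m S powr (-1/2)"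
  have dS: "mat_det m S > 0" using gauss_int[OF spd, of "\<lambda>_. 0"] by simp
  have dP: "mat_det m P = 1 / mat_det m S" using inv_props(2)[OF spd] dS unfolding P_def
    by (simp add: field_simps)
  have K0: "K > 0" unfolding K_def using dS by simp
  have G: "(\<integral>\<^sup>+ z. ennreal (exp (- qf m P (\<lambda>i. z i - w i) / 2)) \<partial>leb m)
      = ennreal ((2*pi) powr (real m / 2) / sqrt (mat_det m P))"
    using gauss_int[OF inv_props(1)[OF spd]] unfolding P_def by blast
  have "(\<integral>\<^sup>+ y. ennreal (gauss_density m S (\<lambda>t. y t - w t)) \<partial>leb m)
      = (\<integral>\<^sup>+ y. ennreal K * ennreal (exp (- qf m P (\<lambda>i. y i - w i) / 2)) \<partial>leb m)"
    using K0 by (intro nn_integral_cong) (simp add: gauss_density_eq K_def P_def ennreal_mult)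
  also have "\<dots> = ennreal K * (\<integral>\<^sup>+ z. ennreal (exp (- qf m P (\<lambda>i. z i - w i) / 2)) \<partial>leb m)"
    by (rule nn_integral_cmult) (rule meas_gauss, simp)
  also have "\<dots> = ennreal (K * ((2*pi) powr (real m / 2) / sqrt (mat_det m P)))"
    unfolding G using K0 by (intro ennreal_mult'[symmetric]) simp
  also have "K * ((2*pi) powr (real m / 2) / sqrt (mat_det m P)) = 1"
  proof -
    have "(2 * pi) powr (- real m / 2) * (2*pi) powr (real m / 2) = 1"
      by (simp add: powr_add[symmetric])
    moreover have "mat_det m S powr (-1/2) = 1 / sqrt (mat_det m S)"
      using dS by (simp add: powr_minus_divide powr_half_sqrt)
    ultimately show ?thesis unfolding K_def dP using dS l3 by simp
  qed
  finally show ?thesis by simp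
qed


lemma meas_gd:
  "(\<lambda>y. ennreal (gauss_density m S (\<lambda>t. y t - w t))) \<in> borel_measurable (leb m)"
proof -
  have [measurable]: "(\<lambda>z. qf m (mat_inv m S) (\<lambda>i. z i - w i)) \<in> borel_measurable (leb m)"
    by (rule meas_qf) simp
  show ?thesis unfolding gauss_density_eq by measurable
qed

lemma young_pt:
  fixes K A B W Dd :: real
  assumes K: "K > 0" and h: "2 * A - B = W - 2 * Dd"
  shows "K * exp (- A / 2) \<le> 2 * (K * exp (- B / 2)) + exp Dd / 2 * (K * exp (- W / 2))"
proof -
  define p where "p = K * exp (- A / 2)"
  define q where "q = K * exp (- B / 2)"
  define g where "g = K * exp (- W / 2)"
  have q0: "q > 0" and g0: "g \<ge> 0" using K by (simp_all add: q_def g_def)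
  have "- A / 2 + - A / 2 = - B / 2 + - W / 2 + Dd" using h by simp
  hence "exp (- A / 2) * exp (- A / 2) = exp (- B / 2) * exp (- W / 2) * exp Dd"
    by (simp add: exp_add[symmetric])
  hence pp: "p * p = q * g * exp Dd" unfolding p_def q_def g_def by (simp add: algebra_simps)
  show ?thesis
  proof (cases "p \<le> 2 * q")
    case True
    have "exp Dd / 2 * g \<ge> 0" using g0 by simp
    then show ?thesis unfolding p_def[symmetric] q_def[symmetric] g_def[symmetric] using True by linarith
  next
    case False
    hence "p * (2 * q) \<le> p * p" using q0 by (intro mult_left_mono) auto
    hence "p * (2 * q) \<le> q * (g * exp Dd)" unfolding pp by (simp add: mult.assoc)
    hence "2 * p \<le> g * exp Dd" using q0 by (simp add: mult.commute mult.left_commute)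
    hence "p \<le> (g * exp Dd) / 2" by linarith
    also have "(g * exp Dd) / 2 = exp Dd / 2 * g" by simp
    finally have "p \<le> exp Dd / 2 * g" .
    also have "\<dots> \<le> 2 * q + exp Dd / 2 * g" using q0 by simp
    finally show ?thesis unfolding p_def[symmetric] q_def[symmetric] g_def[symmetric] .
  qed
qed

lemma core:
  assumes spd: "sym_pos_def m S" and D: "D \<in> sets (leb m)"
    and h1: "1 - enn2real (\<integral>\<^sup>+ y. ennreal (gauss_density m S (\<lambda>t. y t - u t)) * indicator D y \<partial>leb m) \<le> e1"
    and h2: "enn2real (\<integral>\<^sup>+ y. ennreal (gauss_density m S (\<lambda>t. y t - v t)) * indicator D y \<partial>leb m) \<le> e2"
  shows "1 - e1 \<le> 2 * e2 + exp (qf m (mat_inv m S) (\<lambda>i. v i - u i)) / 2"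
proof -
  define P where "P = mat_inv m S"
  define K where "K = (2 * pi) powr (- real m / 2) * mat_det m S powr (-1/2)"
  have dS: "mat_det m S > 0" using gauss_int[OF spd, of "\<lambda>_. 0"] by simp
  have K0: "K > 0" unfolding K_def using dS by simp
  define w where "w = (\<lambda>t. 2 * u t - v t)"
  define k where "k = exp (qf m P (\<lambda>i. v i - u i)) / 2"
  have k0: "k \<ge> 0" by (simp add: k_def)
  define G where "G = (\<lambda>c y. gauss_density m S (\<lambda>t. y t - c t))"
  have Geq: "\<And>c y. G c y = K * exp (- qf m P (\<lambda>t. y t - c t) / 2)"
    unfolding G_def gauss_density_eq K_def P_def by simp
  have G0: "\<And>c y. G c y \<ge> 0" unfolding Geq using K0 by simp
  have pt: "G u y \<le> 2 * G v y + k * G w y" for y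
  proof -
    have "2 * qf m P (\<lambda>t. y t - u t) - qf m P (\<lambda>t. y t - v t)
        = qf m P (\<lambda>i. 2 * (y i - u i) - (y i - v i)) - 2 * qf m P (\<lambda>i. (y i - u i) - (y i - v i))"
      by (rule qf_comb)
    also have "(\<lambda>i. 2 * (y i - u i) - (y i - v i)) = (\<lambda>t. y t - w t)" by (auto simp: w_def)
    also have "(\<lambda>i. (y i - u i) - (y i - v i)) = (\<lambda>i. v i - u i)" by auto
    finally have "2 * qf m P (\<lambda>t. y t - u t) - qf m P (\<lambda>t. y t - v t)
        = qf m P (\<lambda>t. y t - w t) - 2 * qf m P (\<lambda>i. v i - u i)" .
    from young_pt[OF K0 this] show ?thesis unfolding Geq k_def by simp
  qed
  have mG: "\<And>c. (\<lambda>y. ennreal (G c y)) \<in> borel_measurable (leb m)"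
    unfolding G_def by (rule meas_gd)
  have mGD: "\<And>c. (\<lambda>y. ennreal (G c y) * indicator D y) \<in> borel_measurable (leb m)"
    using mG D by measurable
  define Ip where "Ip = (\<integral>\<^sup>+ y. ennreal (G u y) * indicator D y \<partial>leb m)"
  define Iq where "Iq = (\<integral>\<^sup>+ y. ennreal (G v y) * indicator D y \<partial>leb m)"
  define Iw where "Iw = (\<integral>\<^sup>+ y. ennreal (G w y) * indicator D y \<partial>leb m)"
  have tot: "\<And>c. (\<integral>\<^sup>+ y. ennreal (G c y) * indicator D y \<partial>leb m) \<le> 1"
  proof -
    fix c
    have "(\<integral>\<^sup>+ y. ennreal (G c y) * indicator D y \<partial>leb m) \<le> (\<integral>\<^sup>+ y. ennreal (G c y) \<partial>leb m)"
      by (intro nn_integral_mono) (auto simp: indicator_def)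
    also have "\<dots> = 1" unfolding G_def by (rule gauss_total[OF spd])
    finally show "(\<integral>\<^sup>+ y. ennreal (G c y) * indicator D y \<partial>leb m) \<le> 1" .
  qed
  have "Ip \<le> (\<integral>\<^sup>+ y. 2 * (ennreal (G v y) * indicator D y) + ennreal k * (ennreal (G w y) * indicator D y) \<partial>leb m)"
    unfolding Ip_def
  proof (intro nn_integral_mono)
    fix y
    have "ennreal (G u y) \<le> ennreal (2 * G v y + k * G w y)" using pt[of y] by (rule ennreal_leI)
    also have "\<dots> = 2 * ennreal (G v y) + ennreal k * ennreal (G w y)"
      using G0 k0 by (simp add: ennreal_plus ennreal_mult)
    finally show "ennreal (G u y) * indicator D y
        \<le> 2 * (ennreal (G v y) * indicator D y) + ennreal k * (ennreal (G w y) * indicator D y)"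
      by (cases "y \<in> D") (auto simp: algebra_simps)
  qed
  also have "\<dots> = 2 * Iq + ennreal k * Iw"
    unfolding Iq_def Iw_def
    by (subst nn_integral_add) (auto intro!: mGD borel_measurable_times_ennreal borel_measurable_const simp: nn_integral_cmult mGD)
  finally have Ip_le: "Ip \<le> 2 * Iq + ennreal k * Iw" .
  have Iq1: "Iq \<le> 1" and Iw1: "Iw \<le> 1" unfolding Iq_def Iw_def by (rule tot)+
  have Iq_fin: "Iq < (Orderings.top :: ennreal)" using Iq1 by (simp add: order_le_less_trans)
  define rq where "rq = enn2real Iq"
  have rq0: "rq \<ge> 0" by (simp add: rq_def)
  have Iq_eq: "Iq = ennreal rq" unfolding rq_def using Iq_fin by simp
  have "ennreal k * Iw \<le> ennreal k" using Iw1 by (metis mult.right_neutral mult_left_mono zero_le)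
  hence "Ip \<le> 2 * ennreal rq + ennreal k" using Ip_le Iq_eq by (metis add_left_mono order_trans)
  also have "\<dots> = ennreal (2 * rq + k)" using rq0 k0 by (simp add: ennreal_plus ennreal_mult)
  finally have "enn2real Ip \<le> 2 * rq + k" using rq0 k0 by (intro enn2real_leI) auto
  moreover have "1 - enn2real Ip \<le> e1" using h1 unfolding Ip_def G_def .
  moreover have "rq \<le> e2" using h2 unfolding rq_def Iq_def G_def .
  ultimately show ?thesis unfolding k_def P_def by simp
qed

lemma sv_min_le:
  fixes x :: "nat \<Rightarrow> real"
  shows "sv_min m S * sqrt (\<Sum>i<m. (x i)\<^sup>2) \<le> sqrt (\<Sum>i<m. (\<Sum>j<m. S i j * x j)\<^sup>2)"
proof (cases "(\<Sum>i<m. (x i)\<^sup>2) = 0")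
  case True
  then show ?thesis by (simp add: sum_nonneg)
next
  case False
  have s0: "(\<Sum>i<m. (x i)\<^sup>2) > 0" using False by (simp add: order_less_le sum_nonneg)
  define r where "r = sqrt (\<Sum>i<m. (x i)\<^sup>2)"
  have r0: "r > 0" using s0 by (simp add: r_def)
  have r2: "r\<^sup>2 = (\<Sum>i<m. (x i)\<^sup>2)" using s0 by (simp add: r_def)
  define u where "u = (\<lambda>j. x j / r)"
  have u1: "(\<Sum>i<m. (u i)\<^sup>2) = 1"
    unfolding u_def power_divide sum_divide_distrib[symmetric] r2 using s0 by simp
  have "sv_min m S \<le> sqrt (\<Sum>i<m. (\<Sum>j<m. S i j * u j)\<^sup>2)"
    unfolding sv_min_def
    by (rule cINF_lower) (auto intro!: bdd_belowI[where m = 0] sum_nonneg simp: u1)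
  also have "(\<Sum>i<m. (\<Sum>j<m. S i j * u j)\<^sup>2) = (\<Sum>i<m. (\<Sum>j<m. S i j * x j)\<^sup>2) / r\<^sup>2"
  proof -
    have inner: "\<And>i. (\<Sum>j<m. S i j * u j) = (\<Sum>j<m. S i j * x j) / r"
      unfolding u_def by (simp add: sum_divide_distrib)
    show ?thesis unfolding inner power_divide by (simp add: sum_divide_distrib)
  qed
  also have "sqrt \<dots> = sqrt (\<Sum>i<m. (\<Sum>j<m. S i j * x j)\<^sup>2) / r"
    using r0 by (simp add: real_sqrt_divide)
  finally have le: "sv_min m S \<le> sqrt (\<Sum>i<m. (\<Sum>j<m. S i j * x j)\<^sup>2) / r" .
  show ?thesis using le r0 unfolding r_def[symmetric] by (simp add: pos_le_divide_eq)
qed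

lemma S_inv_apply:
  assumes spd: "sym_pos_def m S" and i: "i < m"
  shows "(\<Sum>k<m. S i k * (\<Sum>j<m. mat_inv m S k j * d j)) = d i"
proof -
  have SP: "\<And>i j. i < m \<Longrightarrow> j < m \<Longrightarrow> (\<Sum>k<m. S i k * mat_inv m S k j) = (if i = j then 1 else 0)"
    using inv_exists[OF spd] by blast
  have "(\<Sum>k<m. S i k * (\<Sum>j<m. mat_inv m S k j * d j)) = (\<Sum>j<m. (\<Sum>k<m. S i k * mat_inv m S k j) * d j)"
    unfolding sum_distrib_left sum_distrib_right
    by (subst sum.swap) (simp add: mult.assoc)
  also have "\<dots> = (\<Sum>j<m. (if i = j then d j else 0))"
    using i by (intro sum.cong) (auto simp: SP)
  also have "\<dots> = d i" using i by simp
  finally show ?thesis .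
qed

lemma qf_inv_bound:
  assumes spd: "sym_pos_def m S" and sv: "sv_min m S > 0"
  shows "qf m (mat_inv m S) d \<le> (\<Sum>i<m. (d i)\<^sup>2) / sv_min m S"
proof -
  define x where "x = (\<lambda>k. \<Sum>j<m. mat_inv m S k j * d j)"
  define nd where "nd = sqrt (\<Sum>i<m. (d i)\<^sup>2)"
  define nx where "nx = sqrt (\<Sum>i<m. (x i)\<^sup>2)"
  have q: "qf m (mat_inv m S) d = (\<Sum>i<m. d i * x i)"
    unfolding qf_def x_def sum_distrib_left by (simp add: mult.assoc)
  have "(\<Sum>i<m. d i * x i)\<^sup>2 \<le> (\<Sum>i<m. (d i)\<^sup>2) * (\<Sum>i<m. (x i)\<^sup>2)"
    by (rule Cauchy_Schwarz_ineq_sum)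
  hence "sqrt ((\<Sum>i<m. d i * x i)\<^sup>2) \<le> sqrt ((\<Sum>i<m. (d i)\<^sup>2) * (\<Sum>i<m. (x i)\<^sup>2))"
    by (rule real_sqrt_le_mono)
  hence cs: "(\<Sum>i<m. d i * x i) \<le> nd * nx"
    unfolding nd_def nx_def real_sqrt_mult real_sqrt_abs by simp
  have "sv_min m S * nx \<le> sqrt (\<Sum>i<m. (\<Sum>j<m. S i j * x j)\<^sup>2)"
    unfolding nx_def by (rule sv_min_le)
  also have "(\<Sum>i<m. (\<Sum>j<m. S i j * x j)\<^sup>2) = (\<Sum>i<m. (d i)\<^sup>2)"
    by (intro sum.cong refl) (simp add: x_def S_inv_apply[OF spd])
  finally have "sv_min m S * nx \<le> nd" unfolding nd_def .
  hence nxle: "nx \<le> nd / sv_min m S" using sv by (simp add: field_simps)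
  have nd0: "nd \<ge> 0" by (simp add: nd_def sum_nonneg)
  have "qf m (mat_inv m S) d \<le> nd * (nd / sv_min m S)"
    unfolding q using cs mult_left_mono[OF nxle nd0] by linarith
  also have "nd * (nd / sv_min m S) = (\<Sum>i<m. (d i)\<^sup>2) / sv_min m S"
    unfolding nd_def by (simp add: sum_nonneg)
  finally show ?thesis .
qed
lemma sv_min_nonneg:
  assumes "m \<ge> 1"
  shows "sv_min m S \<ge> 0"
proof -
  define A where "A = {x::nat\<Rightarrow>real. (\<Sum>i<m. (x i)\<^sup>2) = 1}"
  have "(\<Sum>i<m. (if i = 0 then 1 else 0::real)) = 1" using assms by simp
  moreover have "\<And>i. ((if i = (0::nat) then (1::real) else 0))\<^sup>2 = (if i = 0 then 1 else 0)" by simp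
  ultimately have mem: "(\<lambda>i::nat. if i = 0 then (1::real) else 0) \<in> A" unfolding A_def by simp
  have ne: "A \<noteq> {}"
  proof
    assume "A = {}"
    with mem show False by simp
  qed
  show ?thesis unfolding sv_min_def A_def[symmetric] by (rule cINF_greatest[OF ne]) (simp add: sum_nonneg)
qed

lemma powr_bound:
  fixes n m :: nat and a c \<mu> b :: real
  assumes n: "n \<ge> 1" and nm: "n \<le> m" and a: "a > 0" and c: "c > 0" and b: "b > 0" and mu: "\<mu> \<ge> 0"
  shows "real m * (a / real m powr (2 * (1 + \<mu> / 2 + b))) / (c * real n powr (- \<mu>))
          \<le> a / c * real n powr (- (1 + 2 * b))"
proof -
  define E where "E = 2 * (1 + \<mu> / 2 + b)"
  have m0: "real m > 0" using n nm by simp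
  have n0: "real n > 0" using n by simp
  have step1: "real m * (a / real m powr E) = a * real m powr (1 - E)"
    using m0 by (simp add: powr_diff)
  have step2: "real m powr (1 - E) \<le> real n powr (1 - E)"
    using n0 nm b mu by (intro powr_mono2') (auto simp: E_def)
  have step3: "real m * (a / real m powr E) \<le> a * real n powr (1 - E)"
    unfolding step1 using step2 a by simp
  have pos: "c * real n powr (- \<mu>) > 0" using c n0 by simp
  have e: "1 - E - (- \<mu>) = - (1 + 2 * b)" by (simp add: E_def algebra_simps)
  have step4: "real n powr (1 - E) / real n powr (- \<mu>) = real n powr (- (1 + 2 * b))"
    unfolding e[symmetric] by (rule powr_diff[symmetric])
  have "real m * (a / real m powr E) / (c * real n powr (- \<mu>)) \<le> a * real n powr (1 - E) / (c * real n powr (- \<mu>))"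
    using pos by (intro divide_right_mono[OF step3]) simp
  also have "a * real n powr (1 - E) / (c * real n powr (- \<mu>)) = a / c * (real n powr (1 - E) / real n powr (- \<mu>))"
    by simp
  finally show ?thesis unfolding E_def[symmetric] step4 .
qed



theorem lemma5:
  fixes K :: "nat \<Rightarrow> nat" and h :: "nat \<Rightarrow> nat \<Rightarrow> real"
    and S :: "nat \<Rightarrow> nat \<Rightarrow> nat \<Rightarrow> real"
    and \<mu> \<kappa> Pmax R a b :: real
    and e1 e2 :: "nat \<Rightarrow> real"
    and c :: "nat \<Rightarrow> nat \<Rightarrow> nat \<Rightarrow> real"
    and D :: "nat \<Rightarrow> nat \<Rightarrow> (nat \<Rightarrow> real) set"
  assumes mu: "0 \<le> \<mu>" "\<mu> < 1/2"
    and kappa: "0 \<le> \<kappa>" "\<kappa> < 1"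
    and K: "\<And>n. n \<ge> 1 \<Longrightarrow> K n = nat \<lceil>real n powr \<kappa>\<rceil>"
    and taps: "\<And>n. n \<ge> 1 \<Longrightarrow> h n 0 * h n (K n - 1) \<noteq> 0"
    and Spd: "\<And>n. n \<ge> 1 \<Longrightarrow> sym_pos_def (nbar n (K n)) (S n)"
    and Smin: "(\<lambda>n. sv_min (nbar n (K n)) (S n)) \<in> \<Omega>(\<lambda>n. real n powr (- \<mu>))"
    and Smax: "(\<lambda>n. sv_max (nbar n (K n)) (S n)) \<in> O(\<lambda>n. real n powr (\<mu> / 2))"
    and Pmax: "Pmax > 0"
    and ach: "achievable K h S Pmax R"
    and codes: "\<And>n. n \<ge> 1 \<Longrightarrow>
        is_DI_code n (num_msgs n R) (K n) (h n) (S n) Pmax (e1 n) (e2 n) (c n) (D n)"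
    and e1: "e1 \<longlonglongrightarrow> 0" and e2: "e2 \<longlonglongrightarrow> 0"
    and ab: "a > 0" "b > 0"
  shows "\<forall>\<^sub>F n in sequentially. \<forall>i1<num_msgs n R. \<forall>i2<num_msgs n R. i1 \<noteq> i2 \<longrightarrow>
     sqrt (\<Sum>t<nbar n (K n). (conv (h n) (K n) n (c n i1) t - conv (h n) (K n) n (c n i2) t)\<^sup>2)
       \<ge> sqrt (real (nbar n (K n)) * (a / real (nbar n (K n)) powr (2 * (1 + \<mu> / 2 + b))))"
proof -
  obtain cc where cc: "cc > 0"
    and evc: "\<forall>\<^sub>F n in sequentially. norm (sv_min (nbar n (K n)) (S n)) \<ge> cc * norm (real n powr (- \<mu>))"
    using Smin by (elim landau_omega.bigE) auto
  have "((\<lambda>n. e1 n + 2 * e2 n) \<longlongrightarrow> 0 + 2 * 0) sequentially"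
    by (intro tendsto_intros e1 e2)
  hence ev2: "\<forall>\<^sub>F n in sequentially. e1 n + 2 * e2 n < 1/4"
    by (intro order_tendstoD(2)) auto
  have "((\<lambda>n. a / cc * real n powr (- (1 + 2 * b))) \<longlongrightarrow> a / cc * 0) sequentially"
    using ab by (intro tendsto_intros tendsto_neg_powr[OF _ filterlim_real_sequentially]) auto
  hence ev3: "\<forall>\<^sub>F n in sequentially. a / cc * real n powr (- (1 + 2 * b)) < 1/4"
    by (intro order_tendstoD(2)) auto
  have ev4: "\<forall>\<^sub>F n in sequentially. n \<ge> 1" by (rule eventually_ge_at_top)
  show ?thesis using evc ev2 ev3 ev4
  proof eventually_elim
    case (elim n)
    define m where "m = nbar n (K n)"
    have Kn: "K n \<ge> 1"
    proof -
      have "real n powr \<kappa> > 0" using elim(4) by simp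
      hence "Suc 0 \<le> nat \<lceil>real n powr \<kappa>\<rceil>" by linarith
      thus ?thesis using K[OF elim(4)] by simp
    qed
    have nm: "n \<le> m" unfolding m_def nbar_def using Kn by simp
    have m1: "m \<ge> 1" using nm elim(4) by simp
    have spd: "sym_pos_def m (S n)" unfolding m_def by (rule Spd[OF elim(4)])
    have svnn: "sv_min m (S n) \<ge> 0" by (rule sv_min_nonneg[OF m1])
    have n0: "real n > 0" using elim(4) by simp
    have sv_lb: "sv_min m (S n) \<ge> cc * real n powr (- \<mu>)"
      using elim(1) svnn n0 unfolding m_def by simp
    have svpos: "sv_min m (S n) > 0"
    proof -
      have "cc * real n powr (- \<mu>) > 0" using cc n0 by simp
      thus ?thesis using sv_lb by linarith
    qed
    note code = codes[OF elim(4), unfolded is_DI_code_def, folded m_def]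
    show ?case
    proof (intro allI impI)
      fix i1 i2 assume i1: "i1 < num_msgs n R" and i2: "i2 < num_msgs n R" and ne: "i1 \<noteq> i2"
      define u where "u = conv (h n) (K n) n (c n i1)"
      define v where "v = conv (h n) (K n) n (c n i2)"
      define X where "X = (\<Sum>t<m. (u t - v t)\<^sup>2)"
      define Y where "Y = real m * (a / real m powr (2 * (1 + \<mu> / 2 + b)))"
      show "sqrt (\<Sum>t<nbar n (K n). (conv (h n) (K n) n (c n i1) t - conv (h n) (K n) n (c n i2) t)\<^sup>2)
         \<ge> sqrt (real (nbar n (K n)) * (a / real (nbar n (K n)) powr (2 * (1 + \<mu> / 2 + b))))"
        unfolding m_def[symmetric] u_def[symmetric] v_def[symmetric] X_def[symmetric] Y_def[symmetric]
      proof (rule ccontr)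
        assume "\<not> sqrt Y \<le> sqrt X"
        hence XY: "X < Y" by simp
        have Dm: "D n i1 \<in> sets (leb m)" using conjunct1[OF conjunct2[OF code]] i1 by simp
        have h1: "1 - out_prob n (K n) (h n) (S n) (c n i1) (D n i1) \<le> e1 n"
          using conjunct1[OF conjunct2[OF conjunct2[OF code]]] i1 by simp
        have h2: "out_prob n (K n) (h n) (S n) (c n i2) (D n i1) \<le> e2 n"
          using conjunct2[OF conjunct2[OF conjunct2[OF code]]] i1 i2 ne by simp
        note h1' = h1[unfolded out_prob_def, folded m_def u_def]
        note h2' = h2[unfolded out_prob_def, folded m_def v_def]
        have cr: "1 - e1 n \<le> 2 * e2 n + exp (qf m (mat_inv m (S n)) (\<lambda>i. v i - u i)) / 2"
          by (rule core[OF spd Dm h1' h2'])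
        have "qf m (mat_inv m (S n)) (\<lambda>i. v i - u i) \<le> (\<Sum>i<m. (v i - u i)\<^sup>2) / sv_min m (S n)"
          by (rule qf_inv_bound[OF spd svpos])
        also have "(\<Sum>i<m. (v i - u i)\<^sup>2) = X" unfolding X_def by (simp add: power2_commute)
        also have "X / sv_min m (S n) \<le> Y / sv_min m (S n)" using XY svpos by (simp add: divide_right_mono)
        also have "Y / sv_min m (S n) \<le> Y / (cc * real n powr (- \<mu>))"
        proof -
          have "Y \<ge> 0" unfolding Y_def using ab by simp
          moreover have "cc * real n powr (- \<mu>) > 0" using cc n0 by simp
          ultimately show ?thesis using sv_lb by (intro divide_left_mono) auto
        qed
        also have "\<dots> \<le> a / cc * real n powr (- (1 + 2 * b))"
          unfolding Y_def using elim(4) nm ab cc mu by (intro powr_bound) auto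
        also have "\<dots> \<le> 1/4" using elim(3) by simp
        finally have Phi: "qf m (mat_inv m (S n)) (\<lambda>i. v i - u i) \<le> 1/4" .
        have "exp (qf m (mat_inv m (S n)) (\<lambda>i. v i - u i)) \<le> exp (1/4 :: real)" using Phi by simp
        also have "exp (1/4 :: real) \<le> 3/2"
          using exp_bound_lemma[of "1/4 :: real"] by simp
        finally have "1 - e1 n \<le> 2 * e2 n + 3/4" using cr by simp
        thus False using elim(2) by simp
      qed
    qed
  qed
qed


end
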